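(* Let $\mathcal H$ be a finite-dimensional Hilbert space and $\rho$ a density matrix on $\mathcal H$. Let $\sigma^{(1)}=\{|\psi_i\rangle\langle\psi_i|\}$ be the set of rank-1 projectors onto an orthonormal eigenbasis $\{|\psi_i\rangle\}$ of $\rho$, and let $\sigma^{(2)}$ be any exhaustive exclusive set of rank-1 projectors. Then $\mathcal S=\{\rho,\sigma^{(1)},\sigma^{(2)}\}$ is medium consistent, and there are no exhaustive exclusive sets of projectors $\tau^{(1)},\dots,\tau^{(n)}$ such that $\mathcal S'=\{\rho,\sigma^{(1)},\tau^{(1)},\dots,\tau^{(n)},\sigma^{(2)}\}$ is a nontrivial consistent extension of $\mathcal S$.
   Context: A set of projectors $\sigma=\{P_\alpha\}_{\alpha=1,\dots,m}$ on $\mathcal H$ is exhaustive and exclusive if $\sum_\alpha P_\alpha=\mathbb 1$ and $P_\alpha P_\beta=\delta_{\alpha\beta}P_\alpha$. A family of histories $\{\rho,\sigma^{(1)},\dots,\sigma^{(n)}\}$ consists of an initial density matrix $\rho$ and exhaustive exclusive sets $\sigma^{(j)}=\{P^{(j)}_{\alpha_j}\}$ (Heisenberg-picture projectors at successive times $t_1<\dots<t_n$). A history is a tuple $\alpha=(\alpha_1,\dots,\alpha_n)$ with history operator $C_\alpha=P^{(1)}_{\alpha_1}\cdots P^{(n)}_{\alpha_n}$, probability $Pr(\alpha)=\mathrm{Tr}\{C_\alpha^\dagger\rho C_\alpha\}$ and coherence function $D(\alpha;\beta)=\mathrm{Tr}\{C_\alpha^\dagger\rho C_\beta\}$. The family is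 (medium) consistent if $D(\alpha;\beta)=\delta_{\alpha\beta}Pr(\alpha)$ for all histories $\alpha,\beta$. Given a consistent family $\mathcal S=\{\rho,\sigma^{(1)},\dots,\sigma^{(n)}\}$, a family obtained by inserting additional exhaustive exclusive sets of projectors at intermediate times (before the last set $\sigma^{(n)}$) is a consistent extension of $\mathcal S$ if it is consistent; the extension is trivial if for every history $(\alpha_1,\dots,\alpha_n)$ of $\mathcal S$ there is at most one history of the extended family with nonzero probability that agrees with it at the original times, and nontrivial otherwise. *)

theory Defs
  imports "Jordan_Normal_Form.Schur_Decomposition" "Jordan_Normal_Form.DL_Rank"
begin

definition mtrace :: "complex mat \<Rightarrow> complex" where
  "mtrace A = (\<Sum>i<dim_row A. A $$ (i, i))"

definition msum :: "nat \<Rightarrow> complex mat list \<Rightarrow> complex mat" where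
  "msum d Ps = foldr (+) Ps (0\<^sub>m d d)"

definition projector :: "nat \<Rightarrow> complex mat \<Rightarrow> bool" where
  "projector d P \<longleftrightarrow> P \<in> carrier_mat d d \<and> P * P = P \<and> mat_adjoint P = P"

definition rank1_projector :: "nat \<Rightarrow> complex mat \<Rightarrow> bool" where
  "rank1_projector d P \<longleftrightarrow> projector d P \<and> vec_space.rank d P = 1"

definition ee_set :: "nat \<Rightarrow> complex mat list \<Rightarrow> bool" where
  "ee_set d \<sigma> \<longleftrightarrow> (\<forall>P\<in>set \<sigma>. projector d P) \<and> msum d \<sigma> = 1\<^sub>m d \<and>
     (\<forall>a<length \<sigma>. \<forall>b<length \<sigma>. \<sigma> ! a * \<sigma> ! b = (if a = b then \<sigma> ! a else 0\<^sub>m d d))"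

definition density :: "nat \<Rightarrow> complex mat \<Rightarrow> bool" where
  "density d \<rho> \<longleftrightarrow> \<rho> \<in> carrier_mat d d \<and> mat_adjoint \<rho> = \<rho> \<and>
     (\<forall>v\<in>carrier_vec d. 0 \<le> Re ((\<rho> *\<^sub>v v) \<bullet>c v)) \<and> mtrace \<rho> = 1"

definition outer :: "complex vec \<Rightarrow> complex mat" where
  "outer v = mat (dim_vec v) (dim_vec v) (\<lambda>(i, j). v $ i * cnj (v $ j))"

text \<open>A family is given by a list of sets sigma(1),...,sigma(n) (the initial state is separate).
 A history is a list of indices.\<close>
definition histories :: "complex mat list list \<Rightarrow> nat list set" where
  "histories fam = {\<alpha>. length \<alpha> = length fam \<and> (\<forall>j<length fam. \<alpha> ! j < length (fam ! j))}"

definition hist_op :: "nat \<Rightarrow> complex mat list list \<Rightarrow> nat list \<Rightarrow> complex mat" where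
  "hist_op d fam \<alpha> = foldr (*) (map (\<lambda>j. fam ! j ! (\<alpha> ! j)) [0..<length fam]) (1\<^sub>m d)"

definition coherence :: "nat \<Rightarrow> complex mat \<Rightarrow> complex mat list list \<Rightarrow> nat list \<Rightarrow> nat list \<Rightarrow> complex" where
  "coherence d \<rho> fam \<alpha> \<beta> = mtrace (mat_adjoint (hist_op d fam \<alpha>) * \<rho> * hist_op d fam \<beta>)"

definition hist_prob :: "nat \<Rightarrow> complex mat \<Rightarrow> complex mat list list \<Rightarrow> nat list \<Rightarrow> complex" where
  "hist_prob d \<rho> fam \<alpha> = mtrace (mat_adjoint (hist_op d fam \<alpha>) * \<rho> * hist_op d fam \<alpha>)"

definition consistent :: "nat \<Rightarrow> complex mat \<Rightarrow> complex mat list list \<Rightarrow> bool" where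
  "consistent d \<rho> fam \<longleftrightarrow> (\<forall>\<alpha>\<in>histories fam. \<forall>\<beta>\<in>histories fam.
     coherence d \<rho> fam \<alpha> \<beta> = (if \<alpha> = \<beta> then hist_prob d \<rho> fam \<alpha> else 0))"

text \<open>Triviality of an extension fam' of fam, where idx lists the positions (times) in fam'
 of the original sets of fam.\<close>
definition trivial_ext :: "nat \<Rightarrow> complex mat \<Rightarrow> complex mat list list \<Rightarrow> complex mat list list \<Rightarrow> nat list \<Rightarrow> bool" where
  "trivial_ext d \<rho> fam fam' idx \<longleftrightarrow> (\<forall>\<alpha>\<in>histories fam. \<forall>\<beta>1\<in>histories fam'. \<forall>\<beta>2\<in>histories fam'.
     hist_prob d \<rho> fam' \<beta>1 \<noteq> 0 \<and> hist_prob d \<rho> fam' \<beta>2 \<noteq> 0 \<and>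
     map (\<lambda>k. \<beta>1 ! (idx ! k)) [0..<length fam] = \<alpha> \<and>
     map (\<lambda>k. \<beta>2 ! (idx ! k)) [0..<length fam] = \<alpha> \<longrightarrow> \<beta>1 = \<beta>2)"

definition nontrivial_consistent_ext :: "nat \<Rightarrow> complex mat \<Rightarrow> complex mat list list \<Rightarrow> complex mat list list \<Rightarrow> nat list \<Rightarrow> bool" where
  "nontrivial_consistent_ext d \<rho> fam fam' idx \<longleftrightarrow> consistent d \<rho> fam' \<and> \<not> trivial_ext d \<rho> fam fam' idx"

end

theory Submission imports Defs begin

lemma adj_carrier[simp]: "A \<in> carrier_mat n m \<Longrightarrow> mat_adjoint A \<in> carrier_mat m n"
  unfolding mat_adjoint_def by auto

lemma adj_dims[simp]: "dim_row (mat_adjoint A) = dim_col A" "dim_col (mat_adjoint A) = dim_row A"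
  unfolding mat_adjoint_def by auto

lemma adj_index[simp]: fixes A :: "complex mat" shows "i < dim_col A \<Longrightarrow> j < dim_row A \<Longrightarrow> mat_adjoint A $$ (i,j) = cnj (A $$ (j,i))"
  unfolding mat_adjoint_def by (simp add: mat_of_rows_index)

lemma adj_mult: fixes A B :: "complex mat" assumes "A \<in> carrier_mat n m" "B \<in> carrier_mat m p"
  shows "mat_adjoint (A * B) = mat_adjoint B * mat_adjoint A"
proof (rule eq_matI)
  fix i j assume ij: "i < dim_row (mat_adjoint B * mat_adjoint A)" "j < dim_col (mat_adjoint B * mat_adjoint A)"
  hence i: "i < p" and j: "j < n" using assms by auto
  have "mat_adjoint (A * B) $$ (i,j) = cnj ((A*B) $$ (j,i))" using i j assms by simp
  also have "\<dots> = (\<Sum>k<m. cnj (B $$ (k,i)) * cnj (A $$ (j,k)))"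
    using i j assms by (simp add: scalar_prod_def cnj_sum atLeast0LessThan mult.commute)
  also have "\<dots> = (mat_adjoint B * mat_adjoint A) $$ (i,j)"
    using i j assms by (simp add: scalar_prod_def atLeast0LessThan)
  finally show "mat_adjoint (A * B) $$ (i,j) = (mat_adjoint B * mat_adjoint A) $$ (i,j)" .
qed (use assms in auto)

lemma trace_comm: assumes "A \<in> carrier_mat n m" "B \<in> carrier_mat m n"
  shows "mtrace (A * B) = mtrace (B * A)"
  using assms unfolding mtrace_def
  apply (simp add: scalar_prod_def atLeast0LessThan)
  apply (subst sum.swap)
  by (simp add: mult.commute)


definition outer2 :: "complex vec \<Rightarrow> complex vec \<Rightarrow> complex mat" where
  "outer2 u w = mat (dim_vec u) (dim_vec u) (\<lambda>(i, j). u $ i * cnj (w $ j))"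

lemma outer_outer2: "outer v = outer2 v v" unfolding outer_def outer2_def by simp

lemma outer2_carrier[simp]: "u \<in> carrier_vec d \<Longrightarrow> outer2 u w \<in> carrier_mat d d"
  unfolding outer2_def by auto

lemma outer_carrier[simp]: "u \<in> carrier_vec d \<Longrightarrow> outer u \<in> carrier_mat d d"
  unfolding outer_def by auto

lemma adj_outer: "mat_adjoint (outer v) = outer v"
  by (rule eq_matI) (auto simp: outer_def)

lemma mtrace_smult: "A \<in> carrier_mat n n \<Longrightarrow> mtrace (s \<cdot>\<^sub>m A) = s * mtrace A"
  unfolding mtrace_def by (simp add: sum_distrib_left)

lemma mtrace_zero: "mtrace (0\<^sub>m n n) = 0"
  unfolding mtrace_def by simp

lemma sandwich: assumes "u \<in> carrier_vec d" "w \<in> carrier_vec d" "M \<in> carrier_mat d d"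
  shows "outer u * M * outer w = ((M *\<^sub>v w) \<bullet>c u) \<cdot>\<^sub>m outer2 u w"
proof (rule eq_matI)
  fix i j assume "i < dim_row (((M *\<^sub>v w) \<bullet>c u) \<cdot>\<^sub>m outer2 u w)" "j < dim_col (((M *\<^sub>v w) \<bullet>c u) \<cdot>\<^sub>m outer2 u w)"
  hence i: "i < d" and j: "j < d" using assms by (auto simp: outer2_def)
  have "(outer u * M * outer w) $$ (i,j) = (\<Sum>l<d. (\<Sum>k<d. u$i * cnj (u$k) * M $$ (k,l)) * (w $ l * cnj (w $ j)))"
    using assms i j by (simp add: scalar_prod_def atLeast0LessThan outer_def)
  also have "\<dots> = u$i * cnj (w $ j) * (\<Sum>l<d. (\<Sum>k<d. cnj (u$k) * M $$ (k,l) * w $ l))"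
    by (simp add: sum_distrib_left sum_distrib_right mult_ac)
  also have "\<dots> = u$i * cnj (w $ j) * (\<Sum>k<d. (\<Sum>l<d. M $$ (k,l) * w $ l) * cnj (u$k))"
    by (subst sum.swap) (simp add: sum_distrib_left sum_distrib_right mult_ac)
  also have "\<dots> = (((M *\<^sub>v w) \<bullet>c u) \<cdot>\<^sub>m outer2 u w) $$ (i,j)"
    using assms i j by (simp add: scalar_prod_def atLeast0LessThan outer2_def mult_ac)
  finally show "(outer u * M * outer w) $$ (i,j) = (((M *\<^sub>v w) \<bullet>c u) \<cdot>\<^sub>m outer2 u w) $$ (i,j)" .
qed (use assms in \<open>auto simp: outer_def outer2_def\<close>)

lemma trace_outer2: assumes "u \<in> carrier_vec d" "w \<in> carrier_vec d" "M \<in> carrier_mat d d"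
  shows "mtrace (M * outer2 u w) = (M *\<^sub>v u) \<bullet>c w"
  using assms unfolding mtrace_def
  by (simp add: scalar_prod_def atLeast0LessThan outer2_def sum_distrib_right sum_distrib_left mult_ac)


lemma coh_formula:
  assumes r: "\<rho> \<in> carrier_mat d d" and u: "u \<in> carrier_vec d" and w: "w \<in> carrier_vec d"
    and M1: "M1 \<in> carrier_mat d d" and M2: "M2 \<in> carrier_mat d d"
  shows "mtrace (mat_adjoint (outer u * M1) * \<rho> * (outer w * M2)) =
     ((\<rho> *\<^sub>v w) \<bullet>c u) * (((M2 * mat_adjoint M1) *\<^sub>v u) \<bullet>c w)"
proof -
  define s where "s = (\<rho> *\<^sub>v w) \<bullet>c u"
  have ou: "outer u \<in> carrier_mat d d" and ow: "outer w \<in> carrier_mat d d" using u w by auto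
  have aM1: "mat_adjoint M1 \<in> carrier_mat d d" using M1 by simp
  have O: "outer2 u w \<in> carrier_mat d d" using u by simp
  have "mat_adjoint (outer u * M1) * \<rho> * (outer w * M2) = mat_adjoint M1 * (outer u * \<rho> * outer w) * M2"
    using ou ow M1 M2 r aM1 by (simp add: adj_mult[OF ou M1] adj_outer assoc_mult_mat[of _ d d _ d _ d])
  also have "\<dots> = mat_adjoint M1 * (s \<cdot>\<^sub>m outer2 u w) * M2"
    using sandwich[OF u w r] s_def by simp
  finally have e: "mat_adjoint (outer u * M1) * \<rho> * (outer w * M2) = mat_adjoint M1 * (s \<cdot>\<^sub>m outer2 u w) * M2" .
  have "mtrace (mat_adjoint M1 * (s \<cdot>\<^sub>m outer2 u w) * M2) = mtrace (M2 * (mat_adjoint M1 * (s \<cdot>\<^sub>m outer2 u w)))"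
    by (rule trace_comm[of _ d d]) (use aM1 O M2 in auto)
  also have "M2 * (mat_adjoint M1 * (s \<cdot>\<^sub>m outer2 u w)) = s \<cdot>\<^sub>m ((M2 * mat_adjoint M1) * outer2 u w)"
  proof -
    have "M2 * (mat_adjoint M1 * (s \<cdot>\<^sub>m outer2 u w)) = M2 * (s \<cdot>\<^sub>m (mat_adjoint M1 * outer2 u w))"
      using aM1 O by (simp add: mult_smult_distrib[of _ d d])
    also have "\<dots> = s \<cdot>\<^sub>m (M2 * (mat_adjoint M1 * outer2 u w))"
      using aM1 O M2 by (intro mult_smult_distrib[of _ d d _ d]) auto
    also have "\<dots> = s \<cdot>\<^sub>m ((M2 * mat_adjoint M1) * outer2 u w)"
      using aM1 O M2 by (simp add: assoc_mult_mat[of _ d d _ d _ d])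
    finally show ?thesis .
  qed
  also have "mtrace \<dots> = s * mtrace ((M2 * mat_adjoint M1) * outer2 u w)"
    by (rule mtrace_smult[of _ d]) (use aM1 O M2 in auto)
  also have "mtrace ((M2 * mat_adjoint M1) * outer2 u w) = ((M2 * mat_adjoint M1) *\<^sub>v u) \<bullet>c w"
    by (rule trace_outer2[OF u w]) (use aM1 M2 in auto)
  finally show ?thesis using e s_def by simp
qed

context vec_space
begin

lemma rank1_cols:
  assumes A: "A \<in> carrier_mat n n" and rk: "rank A = 1"
  shows "\<exists>\<phi> \<gamma>. \<phi> \<in> carrier_vec n \<and> \<gamma> \<in> carrier_vec n \<and> (\<forall>r<n. \<forall>c<n. A $$ (r,c) = \<phi> $ r * \<gamma> $ c)"
proof -
  have "\<exists>k<n. col A k \<noteq> 0\<^sub>v n"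
  proof (rule ccontr)
    assume "\<not> ?thesis"
    hence "A = 0\<^sub>m n n"
      by (intro eq_matI) (use A in \<open>auto, metis col_def index_vec index_zero_vec(1) carrier_matD\<close>)
    thus False using rk rank_0I by simp
  qed
  then obtain k where k: "k < n" and nz: "col A k \<noteq> 0\<^sub>v n" by blast
  define \<phi> where "\<phi> = col A k"
  have phic: "\<phi> \<in> carrier_vec n" using A k \<phi>_def by auto
  have ex: "\<exists>s. col A c = s \<cdot>\<^sub>v \<phi>" if c: "c < n" for c
  proof (cases "col A c = \<phi>")
    case True thus ?thesis by (intro exI[of _ 1]) (use phic in auto)
  next
    case False
    have cc: "col A c \<in> carrier_vec n" using A c by auto
    have s1: "\<phi> \<in> set (cols A)" using A k \<phi>_def
      by (auto simp: in_set_conv_nth intro!: exI[of _ k])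
    have s2: "col A c \<in> set (cols A)" using A c
      by (auto simp: in_set_conv_nth intro!: exI[of _ c])
    have sub: "{\<phi>, col A c} \<subseteq> set (cols A)" using s1 s2 by auto
    have "lin_dep {\<phi>, col A c}"
    proof (rule ccontr)
      assume "\<not> lin_dep {\<phi>, col A c}"
      hence "card {\<phi>, col A c} \<le> rank A" using rank_ge_card_indpt[OF A sub] by blast
      thus False using False rk by simp
    qed
    define B where "B = mat_of_cols n [\<phi>, col A c]"
    have Bc: "B \<in> carrier_mat n 2" unfolding B_def using mat_of_cols_carrier(1)[of n "[\<phi>, col A c]"] by (simp add: numeral_2_eq_2)
    have colsB: "cols B = [\<phi>, col A c]" unfolding B_def using phic cc by (simp add: cols_mat_of_cols)
    obtain v where v: "v \<in> carrier_vec 2" "v \<noteq> 0\<^sub>v 2" "B *\<^sub>v v = 0\<^sub>v n"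
      using lin_depE[OF Bc] colsB \<open>lin_dep {\<phi>, col A c}\<close> False by auto
    have ent: "\<phi> $ r * v $ 0 + col A c $ r * v $ 1 = 0" if r: "r < n" for r
    proof -
      have z: "(B *\<^sub>v v) $ r = 0" using v r by simp
      have "(B *\<^sub>v v) $ r = (\<Sum>i\<in>{0,1}. B $$ (r,i) * v $ i)"
      proof -
        have "(B *\<^sub>v v) $ r = (\<Sum>i\<in>{0..<2}. B $$ (r,i) * v $ i)"
          using r v(1) Bc by (auto simp: scalar_prod_def intro!: sum.cong)
        also have "{0..<2} = {0,1::nat}" by auto
        finally show ?thesis .
      qed
      moreover have "B $$ (r,0) = \<phi> $ r" "B $$ (r,1) = col A c $ r"
        using r unfolding B_def by (simp_all add: mat_of_cols_index)
      ultimately have "(B *\<^sub>v v) $ r = \<phi> $ r * v $ 0 + col A c $ r * v $ 1" by simp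
      thus ?thesis using z by simp
    qed
    have v1: "v $ 1 \<noteq> 0"
    proof
      assume v10: "v $ 1 = 0"
      have v0: "v $ 0 \<noteq> 0"
      proof
        assume "v $ 0 = 0"
        hence "v = 0\<^sub>v 2" using v10 v(1) by (intro eq_vecI) (auto simp: less_2_cases_iff)
        thus False using v(2) by simp
      qed
      have "\<phi> = 0\<^sub>v n" using ent v10 v0 phic by (intro eq_vecI) auto
      thus False using nz \<phi>_def by simp
    qed
    show ?thesis
    proof (intro exI[of _ "- v $ 0 / v $ 1"] eq_vecI)
      fix r assume "r < dim_vec (- v $ 0 / v $ 1 \<cdot>\<^sub>v \<phi>)"
      hence r: "r < n" using phic by simp
      show "col A c $ r = (- v $ 0 / v $ 1 \<cdot>\<^sub>v \<phi>) $ r"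
        using ent[OF r] v1 r phic by (simp add: field_simps) (metis add_eq_0_iff)
    qed (use cc phic A in auto)
  qed
  define \<gamma> where "\<gamma> = vec n (\<lambda>c. SOME s. col A c = s \<cdot>\<^sub>v \<phi>)"
  have all: "\<forall>r<n. \<forall>c<n. A $$ (r,c) = \<phi> $ r * \<gamma> $ c"
  proof (intro allI impI)
    fix r c assume r: "r < n" and c: "c < n"
    have "col A c = \<gamma> $ c \<cdot>\<^sub>v \<phi>" using someI_ex[OF ex[OF c]] c unfolding \<gamma>_def by simp
    hence "col A c $ r = \<gamma> $ c * \<phi> $ r" using r phic by simp
    thus "A $$ (r,c) = \<phi> $ r * \<gamma> $ c" using A r c by (simp add: mult.commute)
  qed
  have gc: "\<gamma> \<in> carrier_vec n" unfolding \<gamma>_def by simp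
  show ?thesis using all phic gc by blast
qed

end

lemma rank1_proj_mult:
  assumes "rank1_projector d Q"
  shows "\<exists>\<phi> \<gamma>. \<phi> \<in> carrier_vec d \<and> \<gamma> \<in> carrier_vec d \<and> (\<forall>v\<in>carrier_vec d. Q *\<^sub>v v = (\<gamma> \<bullet> v) \<cdot>\<^sub>v \<phi>)"
proof -
  have Q: "Q \<in> carrier_mat d d" and rk: "vec_space.rank d Q = 1"
    using assms unfolding rank1_projector_def projector_def by auto
  obtain \<phi> \<gamma> where phi: "\<phi> \<in> carrier_vec d" and g: "\<gamma> \<in> carrier_vec d"
    and e: "\<forall>r<d. \<forall>c<d. Q $$ (r,c) = \<phi> $ r * \<gamma> $ c"
    using vec_space.rank1_cols[OF Q rk] by blast
  have "Q *\<^sub>v v = (\<gamma> \<bullet> v) \<cdot>\<^sub>v \<phi>" if v: "v \<in> carrier_vec d" for v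
  proof (rule eq_vecI)
    fix r assume "r < dim_vec ((\<gamma> \<bullet> v) \<cdot>\<^sub>v \<phi>)"
    hence r: "r < d" using phi by simp
    show "(Q *\<^sub>v v) $ r = ((\<gamma> \<bullet> v) \<cdot>\<^sub>v \<phi>) $ r"
      using r Q v g phi e by (simp add: scalar_prod_def sum_distrib_left mult_ac)
  qed (use Q phi in auto)
  thus ?thesis using phi g by blast
qed


lemma foldr_mult_carrier:
  assumes "\<forall>x\<in>set xs. x \<in> carrier_mat d d" "B \<in> carrier_mat d d"
  shows "foldr (*) xs B \<in> carrier_mat d d"
  using assms by (induction xs) auto

lemma foldr_mult_right:
  assumes "\<forall>x\<in>set xs. x \<in> carrier_mat d d" "B \<in> carrier_mat d d"
  shows "foldr (*) xs B = foldr (*) xs (1\<^sub>m d) * (B :: complex mat)"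
  using assms
proof (induction xs)
  case Nil thus ?case by simp
next
  case (Cons x xs)
  have c: "foldr (*) xs (1\<^sub>m d) \<in> carrier_mat d d" using Cons.prems foldr_mult_carrier[of xs d "1\<^sub>m d"] by auto
  have "foldr (*) (x # xs) B = x * (foldr (*) xs (1\<^sub>m d) * B)" using Cons by simp
  also have "\<dots> = x * foldr (*) xs (1\<^sub>m d) * B" using Cons.prems c by (simp add: assoc_mult_mat[of _ d d _ d _ d])
  finally show ?case by simp
qed

lemma key2:
  fixes Q T1 T2 :: "complex mat"
  assumes Q: "projector d Q" and Qv: "\<forall>v\<in>carrier_vec d. Q *\<^sub>v v = (\<gamma> \<bullet> v) \<cdot>\<^sub>v \<phi>"
    and T1: "T1 \<in> carrier_mat d d" and T2: "T2 \<in> carrier_mat d d" and u: "u \<in> carrier_vec d"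
    and phi: "\<phi> \<in> carrier_vec d" and g: "\<gamma> \<in> carrier_vec d"
  shows "(((T2 * Q) * mat_adjoint (T1 * Q)) *\<^sub>v u) \<bullet>c u = (\<gamma> \<bullet> (mat_adjoint T1 *\<^sub>v u)) * ((T2 *\<^sub>v \<phi>) \<bullet>c u)"
proof -
  have Qc: "Q \<in> carrier_mat d d" and QQ: "Q * Q = Q" and aQ: "mat_adjoint Q = Q"
    using Q unfolding projector_def by auto
  have aT1: "mat_adjoint T1 \<in> carrier_mat d d" using T1 by simp
  have "(T2 * Q) * mat_adjoint (T1 * Q) = (T2 * Q) * (Q * mat_adjoint T1)"
    using adj_mult[OF T1 Qc] aQ by simp
  also have "\<dots> = T2 * (Q * Q) * mat_adjoint T1"
    using T2 Qc aT1 by (simp add: assoc_mult_mat[of _ d d _ d _ d])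
  also have "\<dots> = T2 * Q * mat_adjoint T1" using QQ by simp
  finally have e: "(T2 * Q) * mat_adjoint (T1 * Q) = T2 * Q * mat_adjoint T1" .
  define x where "x = mat_adjoint T1 *\<^sub>v u"
  have xc: "x \<in> carrier_vec d" using aT1 u x_def by simp
  have "(T2 * Q * mat_adjoint T1) *\<^sub>v u = T2 *\<^sub>v (Q *\<^sub>v x)"
    using T2 Qc aT1 u x_def by (simp add: assoc_mult_mat_vec[of _ d d _ d])
  also have "\<dots> = (\<gamma> \<bullet> x) \<cdot>\<^sub>v (T2 *\<^sub>v \<phi>)" using Qv xc mult_mat_vec[OF T2 phi] by simp
  finally have "(T2 * Q * mat_adjoint T1) *\<^sub>v u = (\<gamma> \<bullet> x) \<cdot>\<^sub>v (T2 *\<^sub>v \<phi>)" .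
  thus ?thesis using e x_def T2 phi u by (simp add: smult_scalar_prod_distrib[of _ d])
qed


lemma hist1:
  assumes "\<alpha>!0 < length \<psi>" "\<sigma>2!(\<alpha>!1) \<in> carrier_mat d d"
  shows "hist_op d [map outer \<psi>, \<sigma>2] \<alpha> = outer (\<psi>!(\<alpha>!0)) * \<sigma>2!(\<alpha>!1)"
  using assms unfolding hist_op_def by (simp add: numeral_2_eq_2)

lemma upt_Suc0: "[0..<Suc k] = 0 # map Suc [0..<k]"
  by (metis upt_conv_Cons zero_less_Suc map_Suc_upt)

lemma hist2:
  fixes \<tau>s :: "complex mat list list"
  assumes "length \<beta> = length \<tau>s + 2" "\<beta>!0 < length \<psi>"
    and "\<forall>j<length \<tau>s. \<tau>s!j!(\<beta>!Suc j) \<in> carrier_mat d d"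
    and "\<sigma>2!(\<beta>!Suc (length \<tau>s)) \<in> carrier_mat d d"
  shows "hist_op d (map outer \<psi> # \<tau>s @ [\<sigma>2]) \<beta> = outer (\<psi>!(\<beta>!0)) *
     (foldr (*) (map (\<lambda>j. \<tau>s!j!(\<beta>!Suc j)) [0..<length \<tau>s]) (1\<^sub>m d) * \<sigma>2!(\<beta>!Suc (length \<tau>s)))"
proof -
  let ?n = "length \<tau>s"
  let ?F = "map outer \<psi> # \<tau>s @ [\<sigma>2]"
  let ?f = "\<lambda>j. ?F ! j ! (\<beta> ! j)"
  have up: "[0..<length ?F] = 0 # map Suc [0..<?n] @ [Suc ?n]"
    using upt_Suc0[of ?n] by simp
  have m: "map (\<lambda>j. ?f (Suc j)) [0..<?n] = map (\<lambda>j. \<tau>s!j!(\<beta>!Suc j)) [0..<?n]"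
    by (intro map_cong) (auto simp: nth_append)
  have mf: "map ?f [0..<length ?F] = outer (\<psi>!(\<beta>!0)) # map (\<lambda>j. \<tau>s!j!(\<beta>!Suc j)) [0..<?n] @ [\<sigma>2!(\<beta>!Suc ?n)]"
    unfolding up using m assms(2) by (simp add: nth_append)
  hence "hist_op d ?F \<beta> = outer (\<psi>!(\<beta>!0)) * foldr (*) (map (\<lambda>j. \<tau>s!j!(\<beta>!Suc j)) [0..<?n]) (\<sigma>2!(\<beta>!Suc ?n) * 1\<^sub>m d)"
    unfolding hist_op_def mf by simp
  also have "\<sigma>2!(\<beta>!Suc ?n) * 1\<^sub>m d = \<sigma>2!(\<beta>!Suc ?n)" using assms(4) by simp
  also have "foldr (*) (map (\<lambda>j. \<tau>s!j!(\<beta>!Suc j)) [0..<?n]) (\<sigma>2!(\<beta>!Suc ?n)) =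
     foldr (*) (map (\<lambda>j. \<tau>s!j!(\<beta>!Suc j)) [0..<?n]) (1\<^sub>m d) * \<sigma>2!(\<beta>!Suc ?n)"
    by (rule foldr_mult_right) (use assms(3,4) in auto)
  finally show ?thesis .
qed


theorem lemma2:
  fixes d :: nat and \<rho> :: "complex mat" and \<psi> :: "complex vec list" and \<sigma>2 :: "complex mat list"
  assumes "density d \<rho>"
    and "length \<psi> = d"
    and "\<forall>i<d. \<psi> ! i \<in> carrier_vec d"
    and "\<forall>i<d. \<forall>j<d. \<psi> ! i \<bullet>c \<psi> ! j = (if i = j then 1 else 0)"
    and "\<forall>i<d. \<exists>c. \<rho> *\<^sub>v (\<psi> ! i) = c \<cdot>\<^sub>v (\<psi> ! i)"
    and "ee_set d \<sigma>2"
    and "\<forall>P\<in>set \<sigma>2. rank1_projector d P"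
  shows "consistent d \<rho> [map outer \<psi>, \<sigma>2] \<and>
    \<not> (\<exists>\<tau>s. (\<forall>\<tau>\<in>set \<tau>s. ee_set d \<tau>) \<and>
          nontrivial_consistent_ext d \<rho> [map outer \<psi>, \<sigma>2] (map outer \<psi> # \<tau>s @ [\<sigma>2]) [0, length \<tau>s + 1])"
proof
  have r: "\<rho> \<in> carrier_mat d d" using assms(1) unfolding density_def by auto
  have psic: "\<And>i. i < d \<Longrightarrow> \<psi> ! i \<in> carrier_vec d" using assms(3) by auto
  have eig: "(\<rho> *\<^sub>v \<psi>!j) \<bullet>c \<psi>!i = 0" if ij: "i < d" "j < d" "i \<noteq> j" for i j
  proof -
    obtain c where c: "\<rho> *\<^sub>v (\<psi> ! j) = c \<cdot>\<^sub>v (\<psi> ! j)" using assms(5) ij by blast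
    have "(\<rho> *\<^sub>v \<psi>!j) \<bullet>c \<psi>!i = c * (\<psi>!j \<bullet>c \<psi>!i)"
      unfolding c using psic[OF ij(1)] psic[OF ij(2)]
      by (simp add: smult_scalar_prod_distrib[of _ d])
    thus ?thesis using assms(4) ij by simp
  qed
  have sproj: "\<And>a. a < length \<sigma>2 \<Longrightarrow> projector d (\<sigma>2!a)" using assms(6) unfolding ee_set_def by auto
  have sorth: "\<And>a b. a < length \<sigma>2 \<Longrightarrow> b < length \<sigma>2 \<Longrightarrow> \<sigma>2!a * \<sigma>2!b = (if a = b then \<sigma>2!a else 0\<^sub>m d d)"
    using assms(6) unfolding ee_set_def by auto
  have sc: "\<And>a. a < length \<sigma>2 \<Longrightarrow> \<sigma>2!a \<in> carrier_mat d d" using sproj unfolding projector_def by auto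
  show "consistent d \<rho> [map outer \<psi>, \<sigma>2]"
    unfolding consistent_def
  proof (intro ballI)
    fix \<alpha> \<beta> assume a: "\<alpha> \<in> histories [map outer \<psi>, \<sigma>2]" and b: "\<beta> \<in> histories [map outer \<psi>, \<sigma>2]"
    have la: "length \<alpha> = 2" "\<alpha>!0 < d" "\<alpha>!1 < length \<sigma>2"
      using a assms(2) unfolding histories_def by auto
    have lb: "length \<beta> = 2" "\<beta>!0 < d" "\<beta>!1 < length \<sigma>2"
      using b assms(2) unfolding histories_def by auto
    show "coherence d \<rho> [map outer \<psi>, \<sigma>2] \<alpha> \<beta> = (if \<alpha> = \<beta> then hist_prob d \<rho> [map outer \<psi>, \<sigma>2] \<alpha> else 0)"
    proof (cases "\<alpha> = \<beta>")
      case True thus ?thesis unfolding coherence_def hist_prob_def by simp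
    next
      case False
      have "coherence d \<rho> [map outer \<psi>, \<sigma>2] \<alpha> \<beta> =
         ((\<rho> *\<^sub>v \<psi>!(\<beta>!0)) \<bullet>c \<psi>!(\<alpha>!0)) * (((\<sigma>2!(\<beta>!1) * mat_adjoint (\<sigma>2!(\<alpha>!1))) *\<^sub>v \<psi>!(\<alpha>!0)) \<bullet>c \<psi>!(\<beta>!0))"
        unfolding coherence_def using la lb assms(2)
        by (simp add: hist1 sc coh_formula[OF r psic psic sc sc])
      also have "\<dots> = 0"
      proof (cases "\<alpha>!0 = \<beta>!0")
        case True
        have "\<alpha>!1 \<noteq> \<beta>!1"
        proof
          assume "\<alpha>!1 = \<beta>!1"
          hence "\<alpha> = \<beta>" using True la(1) lb(1)
            by (intro nth_equalityI) (auto simp: less_2_cases_iff)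
          thus False using False by simp
        qed
        hence "\<sigma>2!(\<beta>!1) * mat_adjoint (\<sigma>2!(\<alpha>!1)) = 0\<^sub>m d d"
          using sorth[OF lb(3) la(3)] sproj[OF la(3)] unfolding projector_def by auto
        moreover have "0\<^sub>m d d *\<^sub>v \<psi>!(\<alpha>!0) = 0\<^sub>v d"
          using psic[OF la(2)] by (intro eq_vecI) (auto simp: scalar_prod_def)
        ultimately show ?thesis using psic[OF la(2)] psic[OF lb(2)] by simp
      next
        case False
        thus ?thesis using eig[OF la(2) lb(2)] by simp
      qed
      finally show ?thesis using False by simp
    qed
  qed
  show "\<not> (\<exists>\<tau>s. (\<forall>\<tau>\<in>set \<tau>s. ee_set d \<tau>) \<and>
          nontrivial_consistent_ext d \<rho> [map outer \<psi>, \<sigma>2] (map outer \<psi> # \<tau>s @ [\<sigma>2]) [0, length \<tau>s + 1])"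
  proof
    assume "\<exists>\<tau>s. (\<forall>\<tau>\<in>set \<tau>s. ee_set d \<tau>) \<and>
          nontrivial_consistent_ext d \<rho> [map outer \<psi>, \<sigma>2] (map outer \<psi> # \<tau>s @ [\<sigma>2]) [0, length \<tau>s + 1]"
    then obtain \<tau>s where ee: "\<forall>\<tau>\<in>set \<tau>s. ee_set d \<tau>"
      and cons: "consistent d \<rho> (map outer \<psi> # \<tau>s @ [\<sigma>2])"
      and ntr: "\<not> trivial_ext d \<rho> [map outer \<psi>, \<sigma>2] (map outer \<psi> # \<tau>s @ [\<sigma>2]) [0, length \<tau>s + 1]"
      unfolding nontrivial_consistent_ext_def by blast
    define n where "n = length \<tau>s"
    define F where "F = map outer \<psi> # \<tau>s @ [\<sigma>2]"
    obtain \<alpha> \<beta>1 \<beta>2 where al: "\<alpha> \<in> histories [map outer \<psi>, \<sigma>2]"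
      and b1: "\<beta>1 \<in> histories F" and b2: "\<beta>2 \<in> histories F"
      and p1: "hist_prob d \<rho> F \<beta>1 \<noteq> 0" and p2: "hist_prob d \<rho> F \<beta>2 \<noteq> 0"
      and m1: "map (\<lambda>k. \<beta>1 ! ([0, n + 1] ! k)) [0..<length [map outer \<psi>, \<sigma>2]] = \<alpha>"
      and m2: "map (\<lambda>k. \<beta>2 ! ([0, n + 1] ! k)) [0..<length [map outer \<psi>, \<sigma>2]] = \<alpha>"
      and ne: "\<beta>1 \<noteq> \<beta>2"
      using ntr unfolding trivial_ext_def F_def n_def by blast
    have e10: "\<beta>1!0 = \<beta>2!0" using arg_cong[OF m1, of "\<lambda>l. l!0"] arg_cong[OF m2, of "\<lambda>l. l!0"] by simp
    have e11: "\<beta>1!Suc n = \<beta>2!Suc n" using arg_cong[OF m1, of "\<lambda>l. l!1"] arg_cong[OF m2, of "\<lambda>l. l!1"] by simp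
    define i where "i = \<beta>1!0"
    define a where "a = \<beta>1!Suc n"
    have hF: "length x = n + 2" "x!0 < d" "\<forall>j<n. x!Suc j < length (\<tau>s!j)" "x!Suc n < length \<sigma>2"
      if "x \<in> histories F" for x
    proof -
      have h: "length x = n + 2" "\<forall>j<n+2. x!j < length (F!j)"
        using that unfolding histories_def F_def n_def by auto
      show "length x = n + 2" using h by simp
      show "x!0 < d" using h(2)[rule_format, of 0] assms(2) unfolding F_def by simp
      show "\<forall>j<n. x!Suc j < length (\<tau>s!j)"
      proof (intro allI impI)
        fix j assume j: "j < n"
        have "x!Suc j < length (F!Suc j)" using h(2) j by simp
        thus "x!Suc j < length (\<tau>s!j)" using j unfolding F_def n_def by (simp add: nth_append)
      qed
      show "x!Suc n < length \<sigma>2" using h(2)[rule_format, of "Suc n"] unfolding F_def n_def by (simp add: nth_append)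
    qed
    have id: "i < d" using hF(2)[OF b1] i_def by simp
    have ad: "a < length \<sigma>2" using hF(4)[OF b1] a_def by simp
    define T where "T x = foldr (*) (map (\<lambda>j. \<tau>s!j!(x!Suc j)) [0..<n]) (1\<^sub>m d)" for x
    have Tc: "T x \<in> carrier_mat d d" if "x \<in> histories F" for x
    proof -
      have "\<forall>y\<in>set (map (\<lambda>j. \<tau>s!j!(x!Suc j)) [0..<n]). y \<in> carrier_mat d d"
      proof
        fix y assume "y \<in> set (map (\<lambda>j. \<tau>s!j!(x!Suc j)) [0..<n])"
        then obtain j where j: "j < n" "y = \<tau>s!j!(x!Suc j)" by auto
        have "ee_set d (\<tau>s!j)" using ee j n_def by auto
        moreover have "y \<in> set (\<tau>s!j)" using hF(3)[OF that] j by auto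
        ultimately show "y \<in> carrier_mat d d" unfolding ee_set_def projector_def by auto
      qed
      thus ?thesis unfolding T_def by (intro foldr_mult_carrier) auto
    qed
    have Tc': "\<forall>j<length \<tau>s. \<tau>s!j!(x!Suc j) \<in> carrier_mat d d" if "x \<in> histories F" for x
    proof (intro allI impI)
      fix j assume j: "j < length \<tau>s"
      have "ee_set d (\<tau>s!j)" using ee j by auto
      moreover have "\<tau>s!j!(x!Suc j) \<in> set (\<tau>s!j)" using hF(3)[OF that] j n_def by auto
      ultimately show "\<tau>s!j!(x!Suc j) \<in> carrier_mat d d" unfolding ee_set_def projector_def by auto
    qed
    define Q where "Q = \<sigma>2!a"
    have Qp: "projector d Q" using sproj[OF ad] Q_def by simp
    have Qc: "Q \<in> carrier_mat d d" using sc[OF ad] Q_def by simp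
    obtain \<phi> \<gamma> where phi: "\<phi> \<in> carrier_vec d" and g: "\<gamma> \<in> carrier_vec d"
      and Qv: "\<forall>v\<in>carrier_vec d. Q *\<^sub>v v = (\<gamma> \<bullet> v) \<cdot>\<^sub>v \<phi>"
      using rank1_proj_mult[of d Q] assms(7) ad Q_def by auto
    have ho: "hist_op d F x = outer (\<psi>!i) * (T x * Q)"
      if "x \<in> histories F" "x!0 = i" "x!Suc n = a" for x
      unfolding F_def T_def Q_def
      using hist2[of x \<tau>s \<psi> d \<sigma>2] hF[OF that(1)] Tc'[OF that(1)] that(2,3) assms(2) n_def sc[OF ad]
      by simp
    define c where "c = (\<rho> *\<^sub>v \<psi>!i) \<bullet>c \<psi>!i"
    define A where "A x = \<gamma> \<bullet> (mat_adjoint (T x) *\<^sub>v \<psi>!i)" for x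
    define B where "B x = (T x *\<^sub>v \<phi>) \<bullet>c \<psi>!i" for x
    have cf: "coherence d \<rho> F x y = c * (A x * B y)"
      if "x \<in> histories F" "x!0 = i" "x!Suc n = a" "y \<in> histories F" "y!0 = i" "y!Suc n = a" for x y
    proof -
      have TQ: "T x * Q \<in> carrier_mat d d" "T y * Q \<in> carrier_mat d d"
        using Tc[OF that(1)] Tc[OF that(4)] Qc by auto
      have "coherence d \<rho> F x y = c * ((((T y * Q) * mat_adjoint (T x * Q)) *\<^sub>v \<psi>!i) \<bullet>c \<psi>!i)"
        unfolding coherence_def ho[OF that(1-3)] ho[OF that(4-6)] c_def
        by (rule coh_formula[OF r psic[OF id] psic[OF id] TQ])
      also have "(((T y * Q) * mat_adjoint (T x * Q)) *\<^sub>v \<psi>!i) \<bullet>c \<psi>!i = A x * B y"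
        unfolding A_def B_def
        by (rule key2[OF Qp Qv Tc[OF that(1)] Tc[OF that(4)] psic[OF id] phi g])
      finally show ?thesis .
    qed
    have H1: "\<beta>1 \<in> histories F" "\<beta>1!0 = i" "\<beta>1!Suc n = a" using b1 i_def a_def by auto
    have H2: "\<beta>2 \<in> histories F" "\<beta>2!0 = i" "\<beta>2!Suc n = a" using b2 i_def a_def e10 e11 by auto
    have "coherence d \<rho> F \<beta>1 \<beta>2 = 0" using cons ne b1 b2 unfolding consistent_def F_def by auto
    hence "c * (A \<beta>1 * B \<beta>2) = 0" using cf[OF H1 H2] by simp
    moreover have "c * (A \<beta>1 * B \<beta>1) \<noteq> 0" using p1 cf[OF H1 H1] unfolding hist_prob_def coherence_def by simp
    moreover have "c * (A \<beta>2 * B \<beta>2) \<noteq> 0" using p2 cf[OF H2 H2] unfolding hist_prob_def coherence_def by simp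
    ultimately show False by simp
  qed
qed

end
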